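(* Let $k\ge1$ be an integer, $\rho\ne0$ real, $0\le q<1$, and $z$ a complex number. Then, as formal power series in $t$, $$\frac{1}{(1+\rho t)^{z/\rho}}\,{\rm Lif}_{k,q}\!\left(\frac{\ln(1+\rho t)}{\rho}\right)=\sum_{n=0}^\infty c_{n,\rho,q}^{(k)}(z)\frac{t^n}{n!},$$ where $(1+\rho t)^{-z/\rho}=\exp\!\big(-\tfrac{z}{\rho}\ln(1+\rho t)\big)$.
   Context: For real $0\le q<1$ (with $0^0=1$), $[x]_q=\frac{1-q^x}{1-q}$. The $q$-polyfactorial function is ${\rm Lif}_{k,q}(w)=\sum_{n=0}^\infty\frac{w^n}{n!\,[n+1]_q^k}$. Jackson's $q$-integral: $\int_0^1 f(x)\,d_qx=(1-q)\sum_{j\ge0} f(q^j)q^j$; multiple integrals are iterated. $(x)_n=x(x-1)\cdots(x-n+1)$, $(x)_0=1$. The $q$-poly-Cauchy polynomials of the first kind with parameter $\rho$ are $c_{n,\rho,q}^{(k)}(z)=\rho^n\int_0^1\cdots\int_0^1\left(\frac{x_1\cdots x_k-z}{\rho}\right)_n d_qx_1\cdots d_qx_k$ ($k$-fold). *)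

theory Defs
  imports "HOL-Analysis.Analysis" "HOL-Computational_Algebra.Formal_Power_Series"
begin

definition qnum :: "real \<Rightarrow> nat \<Rightarrow> real" where
  "qnum q x = (1 - q ^ x) / (1 - q)"

definition falling :: "complex \<Rightarrow> nat \<Rightarrow> complex" where
  "falling x n = (\<Prod>i<n. x - of_nat i)"

definition jackson_int :: "real \<Rightarrow> (real \<Rightarrow> complex) \<Rightarrow> complex" where
  "jackson_int q f = complex_of_real (1 - q) * (\<Sum>j. f (q ^ j) * complex_of_real (q ^ j))"

fun jackson_multi :: "real \<Rightarrow> nat \<Rightarrow> (real list \<Rightarrow> complex) \<Rightarrow> complex" where
  "jackson_multi q 0 F = F []"
| "jackson_multi q (Suc k) F = jackson_int q (\<lambda>x. jackson_multi q k (\<lambda>xs. F (x # xs)))"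

definition qpoly_cauchy1 :: "nat \<Rightarrow> real \<Rightarrow> real \<Rightarrow> nat \<Rightarrow> complex \<Rightarrow> complex" where
  "qpoly_cauchy1 k \<rho> q n z = complex_of_real (\<rho> ^ n) *
     jackson_multi q k (\<lambda>xs. falling ((complex_of_real (prod_list xs) - z) / complex_of_real \<rho>) n)"

definition Lif_fps :: "nat \<Rightarrow> real \<Rightarrow> complex fps" where
  "Lif_fps k q = Abs_fps (\<lambda>n. 1 / (fact n * complex_of_real (qnum q (n + 1) ^ k)))"

definition ln1p_fps :: "real \<Rightarrow> complex fps" where
  "ln1p_fps \<rho> = fps_ln 1 oo (fps_const (complex_of_real \<rho>) * fps_X)"

end

theory Submission
  imports Defs
begin

lemma exp_ln_binom:
  "fps_exp (c::complex) oo fps_ln 1 = fps_binomial c"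
proof -
  let ?a = "fps_exp c oo fps_ln 1"
  have sd: "subdegree (1 + fps_X :: complex fps) = 0"
    by (simp add: subdegree_eq_0_iff)
  have "fps_deriv ?a = (fps_const c * fps_exp c oo fps_ln 1) * fps_deriv (fps_ln (1::complex))"
    by (simp add: fps_compose_deriv)
  also have "\<dots> = fps_const c * ?a * inverse (1 + fps_X)"
    by (simp add: fps_compose_mult_distrib fps_ln_deriv)
  also have "\<dots> = fps_const c * ?a / (1 + fps_X)"
    by (simp add: fps_divide_unit'[OF sd])
  finally have "fps_deriv ?a = fps_const c * ?a / (1 + fps_X)" .
  moreover have "fps_nth ?a 0 = 1" by simp
  ultimately show ?thesis using fps_binomial_ODE_unique' by blast
qed

lemma L0: "fps_nth (ln1p_fps \<rho>) 0 = 0"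
  by (simp add: ln1p_fps_def)

lemma exp_L_nth:
  "fps_nth (fps_exp (w::complex) oo ln1p_fps \<rho>) n = complex_of_real (\<rho>^n) * falling w n / fact n"
proof -
  have "fps_exp w oo ln1p_fps \<rho> = (fps_exp w oo fps_ln 1) oo (fps_const (complex_of_real \<rho>) * fps_X)"
    unfolding ln1p_fps_def by (rule fps_compose_assoc) auto
  also have "\<dots> = Abs_fps (\<lambda>n. complex_of_real \<rho> ^ n * (w gchoose n))"
    by (simp add: exp_ln_binom fps_compose_linear)
  finally show ?thesis
    using gbinomial_mult_fact[of n w]
    by (simp add: falling_def atLeast0LessThan field_simps)
qed


lemma jackson_int_poly:
  assumes q: "0 \<le> q" "q < 1" and S: "finite S"
  shows "jackson_int q (\<lambda>x. \<Sum>m\<in>S. b m * complex_of_real (x ^ m))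
       = (\<Sum>m\<in>S. b m * complex_of_real (1 / qnum q (m+1)))"
proof -
  have g: "\<And>m. q ^ (m+1) < 1" using q by (metis power_strict_mono power_one zero_less_Suc Suc_eq_plus1 less_imp_le power_less_one_iff)
  have g0: "\<And>m. 0 \<le> q ^ (m+1)" using q by simp
  define f where "f m j = b m * complex_of_real ((q^(m+1))^j)" for m j
  have sf: "summable (f m)" for m
  proof -
    have "summable (\<lambda>j. (q^(m+1))^j)" using g[of m] g0[of m] by (intro summable_geometric) simp
    hence "summable (\<lambda>j. complex_of_real ((q^(m+1))^j))" by (simp only: summable_complex_of_real)
    thus ?thesis unfolding f_def by (rule summable_mult)
  qed
  have sumf: "suminf (f m) = b m * complex_of_real (1 / (1 - q^(m+1)))" for m
  proof -
    have "(\<lambda>j. (q^(m+1))^j) sums (1 / (1 - q^(m+1)))"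
      using g[of m] g0[of m] by (intro geometric_sums) simp
    hence "(\<lambda>j. complex_of_real ((q^(m+1))^j)) sums complex_of_real (1 / (1 - q^(m+1)))"
      by (rule sums_of_real)
    hence "f m sums (b m * complex_of_real (1 / (1 - q^(m+1))))"
      unfolding f_def by (rule sums_mult)
    thus ?thesis by (rule sums_unique[symmetric])
  qed
  have eq: "(\<Sum>m\<in>S. b m * complex_of_real ((q^j) ^ m)) * complex_of_real (q^j) = (\<Sum>m\<in>S. f m j)" for j
  proof -
    have r: "(q^j)^m * q^j = (q^(m+1))^j" for m
      by (metis power_mult power_add power_mult_distrib mult.commute power_Suc Suc_eq_plus1)
    show ?thesis unfolding f_def sum_distrib_right
      by (intro sum.cong refl) (simp only: mult.assoc of_real_mult[symmetric] r)
  qed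
  have "jackson_int q (\<lambda>x. \<Sum>m\<in>S. b m * complex_of_real (x ^ m))
      = complex_of_real (1 - q) * (\<Sum>j. \<Sum>m\<in>S. f m j)"
    unfolding jackson_int_def eq ..
  also have "(\<Sum>j. \<Sum>m\<in>S. f m j) = (\<Sum>m\<in>S. suminf (f m))"
    using suminf_sum[of S f] sf by simp
  finally show ?thesis using q
    by (simp add: sumf qnum_def sum_distrib_left field_simps)
qed


lemma jackson_multi_poly:
  assumes q: "0 \<le> q" "q < 1" and S: "finite S"
  shows "jackson_multi q k (\<lambda>xs. \<Sum>m\<in>S. a m * complex_of_real (y * prod_list xs) ^ m)
       = (\<Sum>m\<in>S. a m * complex_of_real (y ^ m / qnum q (m+1) ^ k))"
proof (induction k arbitrary: y)
  case 0
  then show ?case by simp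
next
  case (Suc k)
  have "jackson_multi q (Suc k) (\<lambda>xs. \<Sum>m\<in>S. a m * complex_of_real (y * prod_list xs) ^ m)
      = jackson_int q (\<lambda>x. jackson_multi q k (\<lambda>xs. \<Sum>m\<in>S. a m * complex_of_real ((y * x) * prod_list xs) ^ m))"
    by (simp add: mult.assoc)
  also have "\<dots> = jackson_int q (\<lambda>x. \<Sum>m\<in>S. (a m * complex_of_real (y ^ m / qnum q (m+1) ^ k)) * complex_of_real (x ^ m))"
    unfolding Suc.IH by (simp add: power_mult_distrib mult_ac)
  also have "\<dots> = (\<Sum>m\<in>S. (a m * complex_of_real (y ^ m / qnum q (m+1) ^ k)) * complex_of_real (1 / qnum q (m+1)))"
    by (rule jackson_int_poly[OF q S])
  also have "\<dots> = (\<Sum>m\<in>S. a m * complex_of_real (y ^ m / qnum q (m+1) ^ Suc k))"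
    by (intro sum.cong refl) (simp add: field_simps)
  finally show ?case .
qed


lemma pow_vanish:
  assumes "fps_nth (L::complex fps) 0 = 0" "j < m"
  shows "fps_nth (L ^ m) j = 0"
  using startsby_zero_power_prefix[OF assms(1)] assms(2) by blast

theorem theorem3:
  fixes k :: nat and \<rho> q :: real and z :: complex
  assumes "k \<ge> 1" and "\<rho> \<noteq> 0" and "0 \<le> q" and "q < 1"
  shows "(fps_exp (- z / complex_of_real \<rho>) oo ln1p_fps \<rho>) *
           (Lif_fps k q oo (fps_const (1 / complex_of_real \<rho>) * ln1p_fps \<rho>))
         = Abs_fps (\<lambda>n. qpoly_cauchy1 k \<rho> q n z / fact n)"
proof (rule fps_ext)
  fix n
  define L where "L = ln1p_fps \<rho>"
  define E where "E = fps_exp (- z / complex_of_real \<rho>) oo L"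
  define c where "c m j = fps_nth (L^m) j / (complex_of_real \<rho> ^ m * fact m)" for m j
  have L0: "fps_nth L 0 = 0" unfolding L_def by (rule L0)
  have rho: "complex_of_real \<rho> \<noteq> 0" using assms(2) by simp
  have qn: "qnum q (m+1) \<noteq> 0" for m
  proof -
    have "q ^ (m+1) < 1" using assms(3,4)
      by (metis power_strict_mono power_one zero_less_Suc Suc_eq_plus1 less_imp_le)
    thus ?thesis using assms(4) by (simp add: qnum_def)
  qed
  have expx: "fps_nth (fps_exp (x / complex_of_real \<rho>) oo L) j = (\<Sum>m\<in>{0..n}. x ^ m * c m j)"
    if "j \<le> n" for x j
  proof -
    have "fps_nth (fps_exp (x / complex_of_real \<rho>) oo L) j
        = (\<Sum>m\<in>{0..j}. (x / complex_of_real \<rho>) ^ m / fact m * fps_nth (L^m) j)"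
      by (simp add: fps_compose_nth)
    also have "\<dots> = (\<Sum>m\<in>{0..n}. (x / complex_of_real \<rho>) ^ m / fact m * fps_nth (L^m) j)"
      by (rule sum.mono_neutral_left) (use that pow_vanish[OF L0] in auto)
    also have "\<dots> = (\<Sum>m\<in>{0..n}. x ^ m * c m j)"
      by (intro sum.cong refl) (simp add: c_def power_divide field_simps)
    finally show ?thesis .
  qed
  have lif: "fps_nth (Lif_fps k q oo (fps_const (1 / complex_of_real \<rho>) * L)) j
        = (\<Sum>m\<in>{0..n}. c m j / complex_of_real (qnum q (m+1) ^ k))"
    if "j \<le> n" for j
  proof -
    have pw: "(fps_const (1 / complex_of_real \<rho>) * L) ^ m = fps_const ((1 / complex_of_real \<rho>)^m) * L ^ m" for m
      by (simp add: power_mult_distrib fps_const_power)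
    have "fps_nth (Lif_fps k q oo (fps_const (1 / complex_of_real \<rho>) * L)) j
        = (\<Sum>m\<in>{0..j}. c m j / complex_of_real (qnum q (m+1) ^ k))"
      unfolding fps_compose_nth pw
      by (intro sum.cong refl) (simp add: Lif_fps_def c_def power_divide field_simps)
    also have "\<dots> = (\<Sum>m\<in>{0..n}. c m j / complex_of_real (qnum q (m+1) ^ k))"
      by (rule sum.mono_neutral_left) (use that pow_vanish[OF L0] in \<open>auto simp: c_def\<close>)
    finally show ?thesis .
  qed
  define A where "A m = (\<Sum>i\<in>{0..n}. fps_nth E i * c m (n - i))" for m
  have integrand: "falling ((complex_of_real y - z) / complex_of_real \<rho>) n
      = (\<Sum>m\<in>{0..n}. (fact n / complex_of_real (\<rho>^n) * A m) * complex_of_real (1 * y) ^ m)" for y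
  proof -
    have e: "fps_exp ((complex_of_real y - z) / complex_of_real \<rho>)
        = fps_exp (- z / complex_of_real \<rho>) * fps_exp (complex_of_real y / complex_of_real \<rho>)"
      by (simp add: fps_exp_add_mult[symmetric] diff_divide_distrib)
    have "fps_nth (fps_exp ((complex_of_real y - z) / complex_of_real \<rho>) oo L) n
        = fps_nth (E * (fps_exp (complex_of_real y / complex_of_real \<rho>) oo L)) n"
      unfolding e E_def by (simp add: fps_compose_mult_distrib[OF L0])
    also have "\<dots> = (\<Sum>i\<in>{0..n}. fps_nth E i * (\<Sum>m\<in>{0..n}. complex_of_real y ^ m * c m (n - i)))"
      unfolding fps_mult_nth by (intro sum.cong refl) (simp add: expx)
    also have "\<dots> = (\<Sum>m\<in>{0..n}. A m * complex_of_real y ^ m)"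
      unfolding A_def sum_distrib_left sum_distrib_right
      by (subst sum.swap) (simp add: mult_ac)
    finally have "complex_of_real (\<rho>^n) * falling ((complex_of_real y - z) / complex_of_real \<rho>) n / fact n
        = (\<Sum>m\<in>{0..n}. A m * complex_of_real y ^ m)"
      unfolding L_def exp_L_nth .
    hence "falling ((complex_of_real y - z) / complex_of_real \<rho>) n
        = fact n / complex_of_real (\<rho>^n) * (\<Sum>m\<in>{0..n}. A m * complex_of_real y ^ m)"
      using rho by (simp add: field_simps)
    thus ?thesis by (simp add: sum_distrib_left mult_ac)
  qed
  have "qpoly_cauchy1 k \<rho> q n z / fact n
      = complex_of_real (\<rho> ^ n) / fact n * (\<Sum>m\<in>{0..n}. (fact n / complex_of_real (\<rho>^n) * A m) * complex_of_real (1 ^ m / qnum q (m+1) ^ k))"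
    unfolding qpoly_cauchy1_def integrand
    by (subst jackson_multi_poly[OF assms(3,4)]) simp_all
  also have "\<dots> = (\<Sum>m\<in>{0..n}. A m / complex_of_real (qnum q (m+1) ^ k))"
    unfolding sum_distrib_left
    by (intro sum.cong refl) (use rho in \<open>simp add: field_simps\<close>)
  also have "\<dots> = fps_nth (E * (Lif_fps k q oo (fps_const (1 / complex_of_real \<rho>) * L))) n"
    unfolding fps_mult_nth A_def sum_divide_distrib
    apply (subst sum.swap)
    apply (intro sum.cong refl)
    apply (subst lif, simp)
    apply (simp add: sum_distrib_left)
    done
  finally show "fps_nth ((fps_exp (- z / complex_of_real \<rho>) oo ln1p_fps \<rho>) *
           (Lif_fps k q oo (fps_const (1 / complex_of_real \<rho>) * ln1p_fps \<rho>))) n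
         = fps_nth (Abs_fps (\<lambda>n. qpoly_cauchy1 k \<rho> q n z / fact n)) n"
    by (simp add: E_def L_def)
qed

end
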